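(* Let $\mathscr{S}\subset\mathbb{Z}^2$ be a finite step set, $\theta\in[0,\pi/2)$, and $\delta>0$. Then there exists a context-free grammar with $\mathcal{O}(1/\delta)$ non-terminals and $\mathcal{O}(1/\delta^2)$ rules which generates a $\delta$-rational approximation $\mathrm{walks}(H_{\theta_r},\mathscr{S})$ of $\mathrm{walks}(H_\theta,\mathscr{S})$.
   Context: $H_\theta=\{(x,y):x\sin\theta+y\cos\theta\ge0\}$; $\mathrm{walks}(C,\mathscr{S})$ is the set of walks $x_0=(0,0),x_1,\dots,x_n$ ($n\ge0$) with $x_{j+1}-x_j\in\mathscr{S}$ and all $x_i\in C$. A half-plane model $\mathrm{walks}(H_{\theta_r},\mathscr{S})$ is a $\delta$-rational approximation of $\mathrm{walks}(H_\theta,\mathscr{S})$ if $\tan\theta_r\in\mathbb{Q}$ and $|\tan\theta-\tan\theta_r|\le\delta$. The grammar generates the walks as words over the alphabet $\mathscr{S}$. *)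

theory Defs
  imports Complex_Main
begin

type_synonym step = "int \<times> int"

definition H :: "real \<Rightarrow> step set" where
  "H \<theta> = {(x, y). real_of_int x * sin \<theta> + real_of_int y * cos \<theta> \<ge> 0}"

definition endpoint :: "step list \<Rightarrow> step" where
  "endpoint w = ((\<Sum>s\<leftarrow>w. fst s), (\<Sum>s\<leftarrow>w. snd s))"

definition walks :: "step set \<Rightarrow> step set \<Rightarrow> step list set" where
  "walks C S = {w. set w \<subseteq> S \<and> (\<forall>k \<le> length w. endpoint (take k w) \<in> C)}"

datatype ('n, 't) sym = NT 'n | Tm 't

inductive cfg_step :: "('n \<times> ('n, 't) sym list) set \<Rightarrow> ('n, 't) sym list \<Rightarrow> ('n, 't) sym list \<Rightarrow> bool"
  for R where
  "(A, rhs) \<in> R \<Longrightarrow> cfg_step R (u @ [NT A] @ v) (u @ rhs @ v)"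

definition cfg_lang :: "('n \<times> ('n, 't) sym list) set \<Rightarrow> 'n \<Rightarrow> 't list set" where
  "cfg_lang R A = {w. (cfg_step R)\<^sup>*\<^sup>* [NT A] (map Tm w)}"

definition is_cfg :: "'n set \<Rightarrow> 't set \<Rightarrow> ('n \<times> ('n, 't) sym list) set \<Rightarrow> 'n \<Rightarrow> bool" where
  "is_cfg N T R A \<longleftrightarrow> finite N \<and> finite R \<and> A \<in> N \<and>
     (\<forall>(B, rhs) \<in> R. B \<in> N \<and> (\<forall>x \<in> set rhs. case x of NT C \<Rightarrow> C \<in> N | Tm t \<Rightarrow> t \<in> T))"

end

theory Submission
  imports Defs
begin


fun symL :: "('n \<Rightarrow> 't list set) \<Rightarrow> ('n,'t) sym \<Rightarrow> 't list set" where
  "symL L (NT A) = L A" | "symL L (Tm t) = {[t]}"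

fun Lsf :: "('n \<Rightarrow> 't list set) \<Rightarrow> ('n,'t) sym list \<Rightarrow> 't list set" where
  "Lsf L [] = {[]}"
| "Lsf L (x#xs) = {u@v | u v. u \<in> symL L x \<and> v \<in> Lsf L xs}"

lemma Lsf_append: "Lsf L (xs@ys) = {u@v | u v. u \<in> Lsf L xs \<and> v \<in> Lsf L ys}"
proof (induction xs)
  case Nil then show ?case by auto
next
  case (Cons x xs)
  show ?case
  proof
    show "Lsf L ((x # xs) @ ys) \<subseteq> {u @ v |u v. u \<in> Lsf L (x # xs) \<and> v \<in> Lsf L ys}"
      using Cons by auto (metis append.assoc)
    show "{u @ v |u v. u \<in> Lsf L (x # xs) \<and> v \<in> Lsf L ys} \<subseteq> Lsf L ((x # xs) @ ys)"
      using Cons by auto blast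
  qed
qed

lemma Lsf_map_Tm: "w \<in> Lsf L (map Tm w)"
  by (induction w) auto

lemma Lsf_single: "Lsf L [NT A] = L A" by auto

lemma sound_step:
  assumes R: "\<forall>(B,rhs)\<in>R. Lsf L rhs \<subseteq> L B" and st: "cfg_step R \<alpha> \<beta>" and w: "w \<in> Lsf L \<beta>"
  shows "w \<in> Lsf L \<alpha>"
  using st
proof cases
  case (1 A rhs u v)
  from w 1 obtain w1 w23 where "w = w1 @ w23" "w1 \<in> Lsf L u" "w23 \<in> Lsf L (rhs @ v)"
    by (auto simp: Lsf_append)
  moreover from this(3) obtain w2 w3 where "w23 = w2 @ w3" "w2 \<in> Lsf L rhs" "w3 \<in> Lsf L v"
    by (auto simp: Lsf_append)
  moreover have "w2 \<in> L A" using R 1(3) \<open>w2 \<in> Lsf L rhs\<close> by auto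
  ultimately show ?thesis using 1 by (auto simp: Lsf_append)
qed

lemma sound_steps:
  assumes R: "\<forall>(B,rhs)\<in>R. Lsf L rhs \<subseteq> L B" and st: "(cfg_step R)\<^sup>*\<^sup>* \<alpha> \<beta>"
  shows "\<forall>w. w \<in> Lsf L \<beta> \<longrightarrow> w \<in> Lsf L \<alpha>"
  using st
proof (induction rule: rtranclp_induct)
  case base then show ?case by auto
next
  case (step y z) then show ?case using sound_step[OF R] by blast
qed

lemma cfg_sound:
  assumes R: "\<forall>(B,rhs)\<in>R. Lsf L rhs \<subseteq> L B"
  shows "cfg_lang R A \<subseteq> L A"
proof
  fix w assume "w \<in> cfg_lang R A"
  then have "(cfg_step R)\<^sup>*\<^sup>* [NT A] (map Tm w)" by (simp add: cfg_lang_def)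
  from sound_steps[OF R this] Lsf_map_Tm[of w L] have "w \<in> Lsf L [NT A]" by blast
  then show "w \<in> L A" by simp
qed

lemma step_ctx: "cfg_step R x y \<Longrightarrow> cfg_step R (u@x@v) (u@y@v)"
proof (induction rule: cfg_step.induct)
  case (1 A rhs a b)
  from cfg_step.intros[OF 1, of "u@a" "b@v"] show ?case by simp
qed

lemma steps_ctx: "(cfg_step R)\<^sup>*\<^sup>* x y \<Longrightarrow> (cfg_step R)\<^sup>*\<^sup>* (u@x@v) (u@y@v)"
proof (induction rule: rtranclp_induct)
  case base then show ?case by simp
next
  case (step y z) then show ?case using step_ctx
    by (metis rtranclp.rtrancl_into_rtrancl)
qed

lemma derive_append:
  assumes "(cfg_step R)\<^sup>*\<^sup>* x (map Tm w1)" "(cfg_step R)\<^sup>*\<^sup>* y (map Tm w2)"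
  shows "(cfg_step R)\<^sup>*\<^sup>* (x@y) (map Tm (w1@w2))"
proof -
  have "(cfg_step R)\<^sup>*\<^sup>* ([]@x@y) ([]@map Tm w1@y)" by (rule steps_ctx[OF assms(1)])
  moreover have "(cfg_step R)\<^sup>*\<^sup>* (map Tm w1@y@[]) (map Tm w1@map Tm w2@[])" by (rule steps_ctx[OF assms(2)])
  ultimately show ?thesis by simp
qed

definition der :: "('n \<times> ('n, 't) sym list) set \<Rightarrow> 'n \<Rightarrow> 't list \<Rightarrow> bool" where
  "der R A w \<longleftrightarrow> (cfg_step R)\<^sup>*\<^sup>* [NT A] (map Tm w)"

lemma rule_apply:
  assumes "(A,rhs)\<in>R" "(cfg_step R)\<^sup>*\<^sup>* rhs (map Tm w)"
  shows "der R A w"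
proof -
  have "cfg_step R ([]@[NT A]@[]) ([]@rhs@[])" by (rule cfg_step.intros[OF assms(1)])
  then show ?thesis using assms(2) unfolding der_def
    by (simp add: converse_rtranclp_into_rtranclp)
qed

lemma tm_der: "(cfg_step R)\<^sup>*\<^sup>* [Tm s] (map Tm [s])" by simp

lemma der_nil: "(A,[])\<in>R \<Longrightarrow> der R A []"
  by (rule rule_apply) auto

lemma der_N: "(A,[NT B])\<in>R \<Longrightarrow> der R B w \<Longrightarrow> der R A w"
  by (rule rule_apply) (auto simp: der_def)

lemma der_NN: "(A,[NT B, NT C])\<in>R \<Longrightarrow> der R B u \<Longrightarrow> der R C v \<Longrightarrow> der R A (u@v)"
  by (rule rule_apply, assumption) (use derive_append in \<open>fastforce simp: der_def\<close>)

lemma der_TN: "(A,[Tm s, NT B])\<in>R \<Longrightarrow> der R B v \<Longrightarrow> der R A (s#v)"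
  apply (rule rule_apply, assumption)
  using derive_append[OF tm_der[of R s], of "[NT B]" v] by (simp add: der_def)

lemma der_TNN: "(A,[Tm s, NT B, NT C])\<in>R \<Longrightarrow> der R B u \<Longrightarrow> der R C v \<Longrightarrow> der R A (s#u@v)"
  apply (rule rule_apply, assumption)
  using derive_append[OF tm_der[of R s] derive_append[of R "[NT B]" u "[NT C]" v]] by (simp add: der_def)

lemma der_NNT: "(A,[NT B, NT C, Tm s])\<in>R \<Longrightarrow> der R B u \<Longrightarrow> der R C v \<Longrightarrow> der R A (u@v@[s])"
  apply (rule rule_apply, assumption)
  using derive_append[of R "[NT B]" u "[NT C, Tm s]" "v@[s]"] derive_append[of R "[NT C]" v "[Tm s]" "[s]"] tm_der[of R s]
  by (simp add: der_def)



definition ht :: "(step \<Rightarrow> int) \<Rightarrow> int \<Rightarrow> step list \<Rightarrow> nat \<Rightarrow> int" where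
  "ht h a w k = a + sum_list (map h (take k w))"

definition QL :: "(step \<Rightarrow> int) \<Rightarrow> step set \<Rightarrow> int \<Rightarrow> step list set" where
  "QL h S c = {w. set w \<subseteq> S \<and> (\<forall>k\<le>length w. 0 \<le> ht h c w k)}"
definition DL :: "(step \<Rightarrow> int) \<Rightarrow> step set \<Rightarrow> int \<Rightarrow> step list set" where
  "DL h S d = {w. set w \<subseteq> S \<and> ht h d w (length w) = 0 \<and> (\<forall>k<length w. 1 \<le> ht h d w k)}"
definition UL :: "(step \<Rightarrow> int) \<Rightarrow> step set \<Rightarrow> int \<Rightarrow> step list set" where
  "UL h S e = {w. set w \<subseteq> S \<and> ht h 0 w (length w) = e \<and> (\<forall>k\<le>length w. 0 \<le> ht h 0 w k)}"

lemma ht_0[simp]: "ht h a w 0 = a" by (simp add: ht_def)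
lemma ht_Cons_Suc[simp]: "ht h a (s#w) (Suc k) = ht h (a + h s) w k" by (simp add: ht_def)
lemma ht_shift: "ht h (a+b) w k = b + ht h a w k" by (simp add: ht_def)
lemma ht_app1: "k \<le> length u \<Longrightarrow> ht h a (u@v) k = ht h a u k" by (simp add: ht_def)
lemma ht_app2: "ht h a (u@v) (length u + j) = ht h (ht h a u (length u)) v j" by (simp add: ht_def)
lemma ht_take: "k \<le> n \<Longrightarrow> ht h a (take n w) k = ht h a w k" by (simp add: ht_def min_def)

lemma PC:
  assumes u: "u \<in> DL h S x" and v: "v \<in> UL h S y" and m: "0 \<le> m"
  shows "\<forall>k\<le>length (u@v). m \<le> ht h (x+m) (u@v) k"
    and "ht h (x+m) (u@v) (length (u@v)) = y+m"
    and "set (u@v) \<subseteq> S"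
proof -
  show "\<forall>k\<le>length (u@v). m \<le> ht h (x+m) (u@v) k"
  proof (intro allI impI)
    fix k assume k: "k \<le> length (u@v)"
    show "m \<le> ht h (x+m) (u@v) k"
    proof (cases "k \<le> length u")
      case True
      then have "ht h (x+m) (u@v) k = m + ht h x u k" by (simp add: ht_app1 ht_shift)
      moreover have "0 \<le> ht h x u k"
      proof (cases "k = length u")
        case True then show ?thesis using u by (simp add: DL_def)
      next
        case False then have "k < length u" using \<open>k \<le> length u\<close> by simp
        then show ?thesis using u unfolding DL_def by fastforce
      qed
      ultimately show ?thesis by simp
    next
      case False
      then obtain j where j: "k = length u + j" "j \<le> length v" using k
        by (metis add_le_imp_le_left le_add_diff_inverse length_append nat_le_linear)
      have "ht h (x+m) (u@v) k = ht h (m + 0) v j"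
        using u by (simp add: j ht_app2 ht_shift DL_def)
      also have "\<dots> = m + ht h 0 v j" by (simp add: ht_def)
      finally show ?thesis using v j by (auto simp: UL_def)
    qed
  qed
  have "ht h (x+m) (u@v) (length u + length v) = ht h (m+0) v (length v)"
    using u by (simp add: ht_app2 ht_shift DL_def)
  then show "ht h (x+m) (u@v) (length (u@v)) = y+m" using v by (simp add: ht_def UL_def)
  show "set (u@v) \<subseteq> S" using u v by (auto simp: DL_def UL_def)
qed

lemma PD:
  assumes S: "set w \<subseteq> S" and nn: "\<forall>k\<le>length w. 0 \<le> ht h a w k"
  shows "\<exists>m u v. 0 \<le> m \<and> m \<le> a \<and> m \<le> ht h a w (length w) \<and> w = u@v \<and>
                 u \<in> DL h S (a-m) \<and> v \<in> UL h S (ht h a w (length w) - m)"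
proof -
  define m where "m = Min (ht h a w ` {..length w})"
  have fin: "finite (ht h a w ` {..length w})" by simp
  have ne: "ht h a w ` {..length w} \<noteq> {}" by simp
  have mle: "\<And>k. k \<le> length w \<Longrightarrow> m \<le> ht h a w k" unfolding m_def
    using Min_le[OF fin] by simp
  have "m \<in> ht h a w ` {..length w}" unfolding m_def by (rule Min_in[OF fin ne])
  then obtain k0 where k0: "k0 \<le> length w" "ht h a w k0 = m" by auto
  define t where "t = (LEAST k. ht h a w k = m)"
  have t1: "ht h a w t = m" unfolding t_def by (rule LeastI[of _ k0], rule k0(2))
  have t2: "t \<le> k0" unfolding t_def by (rule Least_le, rule k0(2))
  have t3: "\<And>k. k < t \<Longrightarrow> ht h a w k \<noteq> m" unfolding t_def using not_less_Least by blast
  have tl: "t \<le> length w" using t2 k0 by simp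
  have m0: "0 \<le> m" using nn k0 by auto
  have ma: "m \<le> a" using mle[of 0] by simp
  have mb: "m \<le> ht h a w (length w)" using mle by simp
  define u where "u = take t w"
  define v where "v = drop t w"
  have lu: "length u = t" using tl by (simp add: u_def)
  have hu: "\<And>k. k \<le> t \<Longrightarrow> ht h (a-m) u k = ht h a w k - m"
    unfolding u_def using ht_take[of _ t h "a-m" w] ht_shift[of h "a-m" m w] by simp
  have uD: "u \<in> DL h S (a-m)"
    unfolding DL_def
  proof (intro CollectI conjI allI impI)
    show "set u \<subseteq> S" using S by (auto simp: u_def dest: in_set_takeD)
    show "ht h (a - m) u (length u) = 0" using hu[of t] t1 by (simp add: lu)
    fix k assume "k < length u"
    then have k: "k < t" by (simp add: lu)
    then have "ht h a w k \<noteq> m" "m \<le> ht h a w k" using t3 mle tl by auto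
    then show "1 \<le> ht h (a - m) u k" using hu[of k] k by simp
  qed
  have hv: "\<And>j. ht h 0 v j = ht h a w (t + j) - m"
  proof -
    fix j
    have "ht h a w (t + j) = ht h a (u@v) (length u + j)" 
    proof -
      have uv: "w = u@v" by (simp add: u_def v_def)
      show ?thesis using lu by (subst uv) simp
    qed
    also have "\<dots> = ht h (ht h a u (length u)) v j" by (rule ht_app2)
    also have "ht h a u (length u) = m" using t1 tl by (simp add: lu u_def ht_take min_def)
    finally show "ht h 0 v j = ht h a w (t + j) - m" using ht_shift[of h 0 m v j] by simp
  qed
  have lv: "length v = length w - t" by (simp add: v_def)
  have vU: "v \<in> UL h S (ht h a w (length w) - m)"
    unfolding UL_def
  proof (intro CollectI conjI allI impI)
    show "set v \<subseteq> S" using S by (auto simp: v_def dest: in_set_dropD)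
    show "ht h 0 v (length v) = ht h a w (length w) - m" using tl by (simp add: hv lv)
    fix j assume "j \<le> length v"
    then have "t + j \<le> length w" using tl by (simp add: lv)
    then show "0 \<le> ht h 0 v j" using mle by (simp add: hv)
  qed
  show ?thesis
    by (rule exI[of _ m], rule exI[of _ u], rule exI[of _ v]) (use m0 ma mb uD vU in \<open>simp add: u_def v_def\<close>)
qed



definition qn :: "int \<Rightarrow> nat" where "qn c = 3 * nat c"
definition dn :: "int \<Rightarrow> nat" where "dn c = 3 * nat c + 1"
definition up :: "int \<Rightarrow> nat" where "up c = 3 * nat c + 2"

definition Lsem :: "(step \<Rightarrow> int) \<Rightarrow> step set \<Rightarrow> nat \<Rightarrow> step list set" where
  "Lsem h S n = (if n mod 3 = 0 then QL h S (int (n div 3))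
                 else if n mod 3 = 1 then DL h S (int (n div 3)) else UL h S (int (n div 3)))"

lemma Lsem_qn: "0 \<le> c \<Longrightarrow> Lsem h S (qn c) = QL h S c" by (simp add: Lsem_def qn_def)
lemma Lsem_dn: "0 \<le> c \<Longrightarrow> Lsem h S (dn c) = DL h S c"
proof -
  assume "0 \<le> c"
  have "(3 * nat c + 1) mod 3 = 1" "(3 * nat c + 1) div 3 = nat c" by presburger+
  then show ?thesis using \<open>0 \<le> c\<close> by (simp add: Lsem_def dn_def)
qed
lemma Lsem_up: "0 \<le> c \<Longrightarrow> Lsem h S (up c) = UL h S c"
proof -
  assume "0 \<le> c"
  have "(3 * nat c + 2) mod 3 = 2" "(3 * nat c + 2) div 3 = nat c" by presburger+
  then show ?thesis using \<open>0 \<le> c\<close> by (simp add: Lsem_def up_def)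
qed

definition R6I :: "(step \<Rightarrow> int) \<Rightarrow> step set \<Rightarrow> int \<Rightarrow> (int \<times> step \<times> int) set" where
  "R6I h S M = {(d,s,m). d \<in> {1..M} \<and> s \<in> S \<and> h s < 0 \<and> 0 \<le> m \<and> m \<le> d-1 \<and> m \<le> - h s - 1}"
definition R8I :: "(step \<Rightarrow> int) \<Rightarrow> step set \<Rightarrow> int \<Rightarrow> (int \<times> step \<times> int) set" where
  "R8I h S M = {(e,s,m). e \<in> {0..M} \<and> s \<in> S \<and> 0 \<le> h s \<and> 0 \<le> m \<and> m \<le> h s \<and> m \<le> e}"

definition G :: "(step \<Rightarrow> int) \<Rightarrow> step set \<Rightarrow> int \<Rightarrow> (nat \<times> (nat, step) sym list) set" where
  "G h S M =
     {(qn 0, [])}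
   \<union> (\<lambda>s. (qn 0, [Tm s, NT (qn (h s))])) ` {s \<in> S. 0 \<le> h s}
   \<union> (\<lambda>c. (qn c, [NT (dn c), NT (qn 0)])) ` {1..M}
   \<union> (\<lambda>c. (qn c, [NT (qn (c-1))])) ` {1..M}
   \<union> {(dn 0, [])}
   \<union> (\<lambda>(d,s,m). (dn d, [NT (dn (d-1-m)), NT (up (- h s - 1 - m)), Tm s])) ` R6I h S M
   \<union> {(up 0, [])}
   \<union> (\<lambda>(e,s,m). (up e, [Tm s, NT (dn (h s - m)), NT (up (e-m))])) ` R8I h S M"

lemma R6I_sub: "R6I h S M \<subseteq> {1..M} \<times> S \<times> {0..M}"
  unfolding R6I_def by auto
lemma R8I_sub: "R8I h S M \<subseteq> {0..M} \<times> S \<times> {0..M}"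
  unfolding R8I_def by auto

lemma cu: "card A \<le> a \<Longrightarrow> card B \<le> b \<Longrightarrow> card (A \<union> B) \<le> a + b"
  by (meson add_mono card_Un_le order_trans)

lemma card_G:
  assumes "finite S" "0 \<le> M"
  shows "finite (G h S M)" "card (G h S M) \<le> 3 + card S + 2 * nat M + 2 * (card S * (nat M + 1) * (nat M + 1))"
proof -
  have f6: "finite (R6I h S M)" using R6I_sub[of h S M] assms(1) by (meson finite_SigmaI finite_atLeastAtMost_int finite_subset)
  have f8: "finite (R8I h S M)" using R8I_sub[of h S M] assms(1) by (meson finite_SigmaI finite_atLeastAtMost_int finite_subset)
  show "finite (G h S M)" unfolding G_def using f6 f8 assms by auto
  have c6: "card (R6I h S M) \<le> card S * (nat M + 1) * (nat M + 1)"
  proof -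
    have "card (R6I h S M) \<le> card ({1..M} \<times> S \<times> {0..M})"
      by (rule card_mono) (use R6I_sub assms in auto)
    also have "\<dots> = nat M * (card S * (nat M + 1))" using assms(2) by (simp add: card_cartesian_product nat_add_distrib)
    also have "\<dots> \<le> card S * (nat M + 1) * (nat M + 1)" by simp
    finally show ?thesis .
  qed
  have c8: "card (R8I h S M) \<le> card S * (nat M + 1) * (nat M + 1)"
  proof -
    have "card (R8I h S M) \<le> card ({0..M} \<times> S \<times> {0..M})"
      by (rule card_mono) (use R8I_sub assms in auto)
    also have "\<dots> = (nat M + 1) * (card S * (nat M + 1))" using assms(2) by (simp add: card_cartesian_product nat_add_distrib)
    also have "\<dots> = card S * (nat M + 1) * (nat M + 1)" by simp
    finally show ?thesis .
  qed
  have a: "card ((\<lambda>s. (qn 0, [Tm s, NT (qn (h s))])) ` {s \<in> S. 0 \<le> h s}) \<le> card S"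
    by (rule order.trans[OF card_image_le]) (use assms in \<open>auto intro: card_mono\<close>)
  have b: "card ((\<lambda>c. (qn c, [NT (dn c), NT (qn 0)])) ` {1..M}) \<le> nat M"
    by (rule order.trans[OF card_image_le]) auto
  have c: "card ((\<lambda>c. (qn c, [NT (qn (c-1))])) ` {1..M}) \<le> nat M"
    by (rule order.trans[OF card_image_le]) auto
  have d: "card ((\<lambda>(d,s,m). (dn d, [NT (dn (d-1-m)), NT (up (- h s - 1 - m)), Tm s])) ` R6I h S M) \<le> card S * (nat M + 1) * (nat M + 1)"
    by (rule order.trans[OF card_image_le[OF f6] c6])
  have e: "card ((\<lambda>(e,s,m). (up e, [Tm s, NT (dn (h s - m)), NT (up (e-m))])) ` R8I h S M) \<le> card S * (nat M + 1) * (nat M + 1)"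
    by (rule order.trans[OF card_image_le[OF f8] c8])
  show "card (G h S M) \<le> 3 + card S + 2 * nat M + 2 * (card S * (nat M + 1) * (nat M + 1))"
  proof -
    have "card (G h S M) \<le> 1 + card S + nat M + nat M + 1 + card S * (nat M + 1) * (nat M + 1) + 1 + card S * (nat M + 1) * (nat M + 1)"
      unfolding G_def by (intro cu a b c d e) auto
    then show ?thesis by simp
  qed
qed

lemma is_cfg_G:
  assumes "finite S" "0 \<le> M" "\<forall>s\<in>S. \<bar>h s\<bar> \<le> M"
  shows "is_cfg {..<3 * nat M + 3} S (G h S M) (qn 0)"
  unfolding is_cfg_def
proof (intro conjI)
  show "finite (G h S M)" using card_G assms by blast
  show "qn 0 \<in> {..<3 * nat M + 3}" by (simp add: qn_def)
  have Q: "\<And>c. 0 \<le> c \<Longrightarrow> c \<le> M \<Longrightarrow> qn c < 3 * nat M + 3" by (simp add: qn_def)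
  have D: "\<And>c. 0 \<le> c \<Longrightarrow> c \<le> M \<Longrightarrow> dn c < 3 * nat M + 3" by (simp add: dn_def)
  have U: "\<And>c. 0 \<le> c \<Longrightarrow> c \<le> M \<Longrightarrow> up c < 3 * nat M + 3" by (simp add: up_def)
  have hb: "\<And>s. s \<in> S \<Longrightarrow> h s \<le> M \<and> - M \<le> h s" using assms(3) by force
  show "\<forall>(B, rhs)\<in>G h S M. B \<in> {..<3 * nat M + 3} \<and>
          (\<forall>x\<in>set rhs. case x of NT C \<Rightarrow> C \<in> {..<3 * nat M + 3} | Tm t \<Rightarrow> t \<in> S)"
    unfolding G_def R6I_def R8I_def using assms(2)
    by (auto intro!: Q D U) (smt (verit) assms(3))+
qed (simp)



lemma ht_snoc_final: "ht h a (w@[s]) (length (w@[s])) = ht h a w (length w) + h s"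
  by (simp add: ht_def)

lemma QL_Cons: assumes "s \<in> S" "v \<in> QL h S (c + h s)" "0 \<le> c" shows "s # v \<in> QL h S c"
  unfolding QL_def
proof (intro CollectI conjI allI impI)
  show "set (s # v) \<subseteq> S" using assms by (auto simp: QL_def)
  fix k assume k: "k \<le> length (s # v)"
  show "0 \<le> ht h c (s # v) k"
  proof (cases k)
    case 0 then show ?thesis using assms by simp
  next
    case (Suc j) then show ?thesis using assms k by (auto simp: QL_def)
  qed
qed

lemma G_sound:
  assumes M: "0 \<le> M"
  shows "\<forall>(B,rhs)\<in>G h S M. Lsf (Lsem h S) rhs \<subseteq> Lsem h S B"
proof -
  {
    fix B rhs assume r: "(B,rhs) \<in> G h S M"
    have "Lsf (Lsem h S) rhs \<subseteq> Lsem h S B"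
      using r unfolding G_def
    proof (elim UnE imageE insertE emptyE)
      assume "(B, rhs) = (qn 0, [])"
      then show ?thesis by (auto simp: Lsem_qn QL_def)
    next
      fix s assume e: "(B, rhs) = (qn 0, [Tm s, NT (qn (h s))])" and s: "s \<in> {s \<in> S. 0 \<le> h s}"
      show ?thesis using e s by (auto simp: Lsem_qn intro!: QL_Cons)
    next
      fix c assume e: "(B, rhs) = (qn c, [NT (dn c), NT (qn 0)])" and c: "c \<in> {1..M}"
      show ?thesis
      proof
        fix w assume "w \<in> Lsf (Lsem h S) rhs"
        then obtain u v where w: "w = u@v" and u: "u \<in> DL h S c" and v: "v \<in> QL h S 0"
          using e c by (auto simp: Lsem_qn Lsem_dn)
        have "w \<in> QL h S c" unfolding QL_def
        proof (intro CollectI conjI allI impI)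
          show "set w \<subseteq> S" using u v w by (auto simp: QL_def DL_def)
          fix k assume k: "k \<le> length w"
          show "0 \<le> ht h c w k"
          proof (cases "k \<le> length u")
            case True
            then have "ht h c w k = ht h c u k" by (simp add: w ht_app1)
            moreover have "0 \<le> ht h c u k"
            proof (cases "k = length u")
              case True then show ?thesis using u by (simp add: DL_def)
            next
              case False then have "k < length u" using \<open>k \<le> length u\<close> by simp
              then show ?thesis using u unfolding DL_def by fastforce
            qed
            ultimately show ?thesis by simp
          next
            case False
            then obtain j where j: "k = length u + j" "j \<le> length v" using k w
              by (metis add_le_imp_le_left le_add_diff_inverse length_append nat_le_linear)
            have "ht h c w k = ht h 0 v j" using u by (simp add: w j ht_app2 DL_def)
            then show ?thesis using v j by (auto simp: QL_def)
          qed
        qed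
        then show "w \<in> Lsem h S B" using e c by (simp add: Lsem_qn)
      qed
    next
      fix c assume e: "(B, rhs) = (qn c, [NT (qn (c-1))])" and c: "c \<in> {1..M}"
      show ?thesis
      proof
        fix w assume "w \<in> Lsf (Lsem h S) rhs"
        then have w: "w \<in> QL h S (c-1)" using e c by (auto simp: Lsem_qn)
        have "w \<in> QL h S c" using w unfolding QL_def
        proof (intro CollectI conjI allI impI)
          fix k assume k: "k \<le> length w"
          have "ht h c w k = 1 + ht h (c-1) w k" by (simp add: ht_def)
          then show "0 \<le> ht h c w k" using w k unfolding QL_def by auto
        qed auto
        then show "w \<in> Lsem h S B" using e c by (simp add: Lsem_qn)
      qed
    next
      assume "(B, rhs) = (dn 0, [])"
      then show ?thesis by (auto simp: Lsem_dn DL_def)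
    next
      fix x assume e: "(B, rhs) = (case x of (d,s,m) \<Rightarrow> (dn d, [NT (dn (d-1-m)), NT (up (- h s - 1 - m)), Tm s]))"
        and x: "x \<in> R6I h S M"
      obtain d s m where x': "x = (d,s,m)" by (cases x) auto
      have dsm: "1 \<le> d" "d \<le> M" "s \<in> S" "h s < 0" "0 \<le> m" "m \<le> d-1" "m \<le> - h s - 1"
        using x unfolding x' R6I_def by auto
      have e': "B = dn d" "rhs = [NT (dn (d-1-m)), NT (up (- h s - 1 - m)), Tm s]" using e x' by auto
      show ?thesis
      proof
        fix w assume "w \<in> Lsf (Lsem h S) rhs"
        then obtain u v where w: "w = (u@v)@[s]" and u: "u \<in> DL h S (d-1-m)" and v: "v \<in> UL h S (- h s - 1 - m)"
          using e' dsm by (auto simp: Lsem_up Lsem_dn)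
        note pc = PC[OF u v dsm(5)]
        have hd: "\<And>k. ht h d (u@v) k = 1 + ht h (d - 1 - m + m) (u@v) k" by (simp add: ht_def)
        have "w \<in> DL h S d" unfolding DL_def
        proof (intro CollectI conjI allI impI)
          show "set w \<subseteq> S" using pc(3) dsm w by auto
          show "ht h d w (length w) = 0" using pc(2) hd[of "length (u@v)"] unfolding w ht_snoc_final by simp
          fix k assume "k < length w"
          then have k: "k \<le> length (u@v)" using w by simp
          then have "ht h d w k = ht h d (u@v) k" unfolding w by (rule ht_app1)
          then show "1 \<le> ht h d w k" using pc(1) k hd[of k] dsm by force
        qed
        then show "w \<in> Lsem h S B" using e' dsm by (simp add: Lsem_dn)
      qed
    next
      assume "(B, rhs) = (up 0, [])"
      then show ?thesis by (auto simp: Lsem_up UL_def)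
    next
      fix x assume e: "(B, rhs) = (case x of (e,s,m) \<Rightarrow> (up e, [Tm s, NT (dn (h s - m)), NT (up (e-m))]))"
        and x: "x \<in> R8I h S M"
      obtain ee s m where x': "x = (ee,s,m)" by (cases x) auto
      have dsm: "0 \<le> ee" "ee \<le> M" "s \<in> S" "0 \<le> h s" "0 \<le> m" "m \<le> h s" "m \<le> ee"
        using x unfolding x' R8I_def by auto
      have e': "B = up ee" "rhs = [Tm s, NT (dn (h s - m)), NT (up (ee-m))]" using e x' by auto
      show ?thesis
      proof
        fix w assume "w \<in> Lsf (Lsem h S) rhs"
        then obtain u v where w: "w = s#(u@v)" and u: "u \<in> DL h S (h s - m)" and v: "v \<in> UL h S (ee - m)"
          using e' dsm by (auto simp: Lsem_up Lsem_dn)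
        note pc = PC[OF u v dsm(5)]
        have "w \<in> UL h S ee" unfolding UL_def
        proof (intro CollectI conjI allI impI)
          show "set w \<subseteq> S" using pc(3) dsm w by auto
          show "ht h 0 w (length w) = ee" using pc(2) unfolding w by simp
          fix k assume k: "k \<le> length w"
          show "0 \<le> ht h 0 w k"
          proof (cases k)
            case 0 then show ?thesis by simp
          next
            case (Suc j) then show ?thesis using pc(1) k dsm unfolding w by force
          qed
        qed
        then show "w \<in> Lsem h S B" using e' dsm by (simp add: Lsem_up)
      qed
    qed
  }
  then show ?thesis by blast
qed



lemma mem1: "(qn 0, []) \<in> G h S M" by (simp add: G_def)
lemma mem2: "s \<in> S \<Longrightarrow> 0 \<le> h s \<Longrightarrow> (qn 0, [Tm s, NT (qn (h s))]) \<in> G h S M" by (simp add: G_def)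
lemma mem3: "1 \<le> c \<Longrightarrow> c \<le> M \<Longrightarrow> (qn c, [NT (dn c), NT (qn 0)]) \<in> G h S M" by (simp add: G_def)
lemma mem4: "1 \<le> c \<Longrightarrow> c \<le> M \<Longrightarrow> (qn c, [NT (qn (c-1))]) \<in> G h S M" by (simp add: G_def)
lemma mem5: "(dn 0, []) \<in> G h S M" by (simp add: G_def)
lemma mem7: "(up 0, []) \<in> G h S M" by (simp add: G_def)
lemma mem6: assumes "(d,s,m) \<in> R6I h S M"
  shows "(dn d, [NT (dn (d-1-m)), NT (up (- h s - 1 - m)), Tm s]) \<in> G h S M"
proof -
  have "(dn d, [NT (dn (d-1-m)), NT (up (- h s - 1 - m)), Tm s]) \<in>
     (\<lambda>(d,s,m). (dn d, [NT (dn (d-1-m)), NT (up (- h s - 1 - m)), Tm s])) ` R6I h S M"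
    by (rule rev_image_eqI[OF assms]) simp
  then show ?thesis unfolding G_def by - (rule UnI1, rule UnI1, rule UnI2)
qed
lemma mem8: assumes "(e,s,m) \<in> R8I h S M"
  shows "(up e, [Tm s, NT (dn (h s - m)), NT (up (e-m))]) \<in> G h S M"
proof -
  have "(up e, [Tm s, NT (dn (h s - m)), NT (up (e-m))]) \<in>
     (\<lambda>(e,s,m). (up e, [Tm s, NT (dn (h s - m)), NT (up (e-m))])) ` R8I h S M"
    by (rule rev_image_eqI[OF assms]) simp
  then show ?thesis unfolding G_def by - (rule UnI2)
qed

lemma DU_complete:
  assumes hb: "\<forall>s\<in>S. \<bar>h s\<bar> \<le> M"
  shows "\<forall>w. length w = n \<longrightarrow>
    (\<forall>d. 0 \<le> d \<longrightarrow> d \<le> M \<longrightarrow> w \<in> DL h S d \<longrightarrow> der (G h S M) (dn d) w) \<and>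
    (\<forall>e. 0 \<le> e \<longrightarrow> e \<le> M \<longrightarrow> w \<in> UL h S e \<longrightarrow> der (G h S M) (up e) w)"
proof (induction n rule: less_induct)
  case (less n)
  show ?case
  proof (intro allI impI conjI)
    fix w :: "step list" and d assume n: "length w = n" and d: "0 \<le> d" "d \<le> M" and w: "w \<in> DL h S d"
    show "der (G h S M) (dn d) w"
    proof (cases "d = 0")
      case True
      have "w = []"
      proof (rule ccontr)
        assume "w \<noteq> []"
        then have "1 \<le> ht h d w 0" using w unfolding DL_def by blast
        then show False using True by simp
      qed
      then show ?thesis using True der_nil[OF mem5] by simp
    next
      case False
      then have d1: "1 \<le> d" using d by simp
      have "w \<noteq> []" using w d1 by (auto simp: DL_def)
      then obtain u s where ws: "w = u @ [s]" by (metis rev_exhaust)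
      define f where "f = ht h d u (length u)"
      have sS: "s \<in> S" and uS: "set u \<subseteq> S" using w ws by (auto simp: DL_def)
      have f1: "1 \<le> f" using w ws unfolding DL_def f_def by (auto simp: ht_app1)
      have fin: "f + h s = 0" using w ws unfolding DL_def f_def by (simp add: ht_snoc_final del: length_append)
      have hsM: "\<bar>h s\<bar> \<le> M" using hb sS by blast
      have unn: "\<forall>k\<le>length u. 0 \<le> ht h (d-1) u k"
      proof (intro allI impI)
        fix k assume k: "k \<le> length u"
        then have "k < length w" using ws by simp
        then have "1 \<le> ht h d w k" using w unfolding DL_def by blast
        moreover have "ht h d w k = ht h d u k" using k ws by (simp add: ht_app1)
        moreover have "ht h d u k = 1 + ht h (d-1) u k" by (simp add: ht_def)
        ultimately show "0 \<le> ht h (d-1) u k" by simp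
      qed
      have fu: "ht h (d-1) u (length u) = f - 1" by (simp add: f_def ht_def)
      from PD[OF uS unn] obtain m u1 u2 where m: "0 \<le> m" "m \<le> d-1" "m \<le> f - 1" and u: "u = u1@u2"
        and u1: "u1 \<in> DL h S (d-1-m)" and u2: "u2 \<in> UL h S (f - 1 - m)" unfolding fu by blast
      have l1: "length u1 < n" "length u2 < n" using n ws u by auto
      have hs: "- h s - 1 - m = f - 1 - m" using fin by simp
      have r: "(d,s,m) \<in> R6I h S M" unfolding R6I_def using d d1 sS fin m f1 by auto
      have D1: "der (G h S M) (dn (d-1-m)) u1" using less.IH[OF l1(1)] u1 m d by auto
      have D2: "der (G h S M) (up (f-1-m)) u2" using less.IH[OF l1(2)] u2 m hsM fin by auto
      have "der (G h S M) (dn d) (u1@u2@[s])" using der_NNT[OF mem6[OF r] D1] D2 hs by simp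
      then show ?thesis using ws u by simp
    qed
  next
    fix w :: "step list" and e assume n: "length w = n" and e: "0 \<le> e" "e \<le> M" and w: "w \<in> UL h S e"
    show "der (G h S M) (up e) w"
    proof (cases w)
      case Nil
      then have "e = 0" using w by (simp add: UL_def)
      then show ?thesis using Nil der_nil[OF mem7] by simp
    next
      case (Cons s w')
      have sS: "s \<in> S" and wS: "set w' \<subseteq> S" using w Cons by (auto simp: UL_def)
      have "Suc 0 \<le> length w" using Cons by simp
      then have "0 \<le> ht h 0 w (Suc 0)" using w unfolding UL_def by blast
      then have hs0: "0 \<le> h s" using Cons by simp
      have hsM: "\<bar>h s\<bar> \<le> M" using hb sS by blast
      have wnn: "\<forall>j\<le>length w'. 0 \<le> ht h (h s) w' j"
      proof (intro allI impI)
        fix j assume "j \<le> length w'"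
        then have "Suc j \<le> length w" using Cons by simp
        then have "0 \<le> ht h 0 w (Suc j)" using w unfolding UL_def by blast
        then show "0 \<le> ht h (h s) w' j" using Cons by simp
      qed
      have wf: "ht h (h s) w' (length w') = e" using w Cons unfolding UL_def by simp
      from PD[OF wS wnn] obtain m u1 u2 where m: "0 \<le> m" "m \<le> h s" "m \<le> e" and u: "w' = u1@u2"
        and u1: "u1 \<in> DL h S (h s - m)" and u2: "u2 \<in> UL h S (e - m)" unfolding wf by blast
      have l1: "length u1 < n" "length u2 < n" using n Cons u by auto
      have r: "(e,s,m) \<in> R8I h S M" unfolding R8I_def using e sS hs0 m by auto
      have D1: "der (G h S M) (dn (h s - m)) u1" using less.IH[OF l1(1)] u1 m hsM by auto
      have D2: "der (G h S M) (up (e-m)) u2" using less.IH[OF l1(2)] u2 m e by auto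
      show ?thesis using der_TNN[OF mem8[OF r] D1 D2] Cons u by simp
    qed
  qed
qed



lemma Q_complete:
  assumes hb: "\<forall>s\<in>S. \<bar>h s\<bar> \<le> M"
  shows "\<forall>w. length w = n \<longrightarrow> (\<forall>c. 0 \<le> c \<longrightarrow> c \<le> M \<longrightarrow> w \<in> QL h S c \<longrightarrow> der (G h S M) (qn c) w)"
proof (induction n rule: less_induct)
  case (less n)
  show ?case
  proof (intro allI impI)
    fix w :: "step list" and c assume n: "length w = n" and c: "0 \<le> c" "c \<le> M" and w: "w \<in> QL h S c"
    have main: "\<forall>c. int i \<le> M \<longrightarrow> w \<in> QL h S (int i) \<longrightarrow> der (G h S M) (qn (int i)) w" for i
    proof (induction i)
      case 0
      show ?case
      proof (intro allI impI)
        assume w0: "w \<in> QL h S (int 0)"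
        show "der (G h S M) (qn (int 0)) w"
        proof (cases w)
          case Nil then show ?thesis using der_nil[OF mem1] by simp
        next
          case (Cons s w')
          have sS: "s \<in> S" and wS: "set w' \<subseteq> S" using w0 Cons by (auto simp: QL_def)
          have "Suc 0 \<le> length w" using Cons by simp
          then have "0 \<le> ht h 0 w (Suc 0)" using w0 unfolding QL_def by auto
          then have hs0: "0 \<le> h s" using Cons by simp
          have hsM: "\<bar>h s\<bar> \<le> M" using hb sS by blast
          have "w' \<in> QL h S (h s)" unfolding QL_def
          proof (intro CollectI conjI allI impI)
            show "set w' \<subseteq> S" by fact
            fix j assume "j \<le> length w'"
            then have "Suc j \<le> length w" using Cons by simp
            then have "0 \<le> ht h 0 w (Suc j)" using w0 unfolding QL_def by auto
            then show "0 \<le> ht h (h s) w' j" using Cons by simp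
          qed
          moreover have "length w' < n" using n Cons by simp
          ultimately have "der (G h S M) (qn (h s)) w'" using less.IH hs0 hsM by auto
          then show ?thesis using der_TN[OF mem2[of s S h M, OF sS hs0]] Cons by simp
        qed
      qed
    next
      case (Suc i)
      show ?case
      proof (intro allI impI)
        define c where "c = int (Suc i)"
        assume cM: "int (Suc i) \<le> M" and wc: "w \<in> QL h S (int (Suc i))"
        then have cM': "c \<le> M" and wc': "w \<in> QL h S c" and c1: "1 \<le> c" by (auto simp: c_def)
        show "der (G h S M) (qn (int (Suc i))) w"
        proof (cases "\<forall>k\<le>length w. 1 \<le> ht h c w k")
          case True
          have "w \<in> QL h S (int i)" unfolding QL_def
          proof (intro CollectI conjI allI impI)
            show "set w \<subseteq> S" using wc by (simp add: QL_def)
            fix k assume "k \<le> length w"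
            then have "1 \<le> ht h c w k" using True by blast
            moreover have "ht h c w k = 1 + ht h (int i) w k" by (simp add: c_def ht_def)
            ultimately show "0 \<le> ht h (int i) w k" by simp
          qed
          then have "der (G h S M) (qn (int i)) w" using Suc.IH cM by simp
          moreover have "c - 1 = int i" by (simp add: c_def)
          ultimately show ?thesis using der_N[OF mem4[OF c1 cM']] by (simp add: c_def)
        next
          case False
          then obtain k0 where k0: "k0 \<le> length w" "ht h c w k0 < 1" by auto
          have nn: "\<And>k. k \<le> length w \<Longrightarrow> 0 \<le> ht h c w k" using wc' by (simp add: QL_def)
          have k0': "ht h c w k0 = 0" using k0 nn[OF k0(1)] by simp
          define t where "t = (LEAST k. ht h c w k = 0)"
          have t1: "ht h c w t = 0" unfolding t_def by (rule LeastI[of _ k0], rule k0')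
          have t2: "t \<le> k0" unfolding t_def by (rule Least_le, rule k0')
          have t3: "\<And>k. k < t \<Longrightarrow> ht h c w k \<noteq> 0" unfolding t_def using not_less_Least by blast
          have tl: "t \<le> length w" using t2 k0 by simp
          have t0: "t \<noteq> 0" using t1 c1 by (cases t) auto
          define u where "u = take t w"
          define v where "v = drop t w"
          have uv: "w = u@v" by (simp add: u_def v_def)
          have lu: "length u = t" using tl by (simp add: u_def)
          have uD: "u \<in> DL h S c" unfolding DL_def
          proof (intro CollectI conjI allI impI)
            show "set u \<subseteq> S" using wc' by (auto simp: u_def QL_def dest: in_set_takeD)
            show "ht h c u (length u) = 0" using t1 tl by (simp add: lu u_def ht_take)
            fix k assume "k < length u"
            then have k: "k < t" by (simp add: lu)
            then have "ht h c w k \<noteq> 0" "0 \<le> ht h c w k" using t3 nn tl by auto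
            then show "1 \<le> ht h c u k" using k by (simp add: u_def ht_take)
          qed
          have hv: "ht h 0 v j = ht h c w (t + j)" for j
          proof -
            have "ht h c w (t + j) = ht h c (u@v) (length u + j)" using lu by (subst uv) simp
            also have "\<dots> = ht h (ht h c u (length u)) v j" by (rule ht_app2)
            also have "ht h c u (length u) = 0" using uD by (simp add: DL_def)
            finally show ?thesis by simp
          qed
          have vQ: "v \<in> QL h S 0" unfolding QL_def
          proof (intro CollectI conjI allI impI)
            show "set v \<subseteq> S" using wc' by (auto simp: v_def QL_def dest: in_set_dropD)
            fix j assume "j \<le> length v"
            then have "t + j \<le> length w" using tl by (simp add: v_def)
            then show "0 \<le> ht h 0 v j" using nn by (simp add: hv)
          qed
          have lv: "length v < n" using n t0 tl by (simp add: v_def)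
          have Dv: "der (G h S M) (qn 0) v" using less.IH[OF lv] vQ cM' c1 by auto
          have Du: "der (G h S M) (dn c) u" using DU_complete[OF hb] uD c1 cM' by auto
          show ?thesis using der_NN[OF mem3[OF c1 cM'] Du Dv] uv by (simp add: c_def)
        qed
      qed
    qed
    have "int (nat c) \<le> M" "w \<in> QL h S (int (nat c))" using c w by auto
    then have "der (G h S M) (qn (int (nat c))) w" using main[of "nat c"] by (metis (no_types))
    then show "der (G h S M) (qn c) w" using c by simp
  qed
qed

lemma G_lang:
  assumes hb: "\<forall>s\<in>S. \<bar>h s\<bar> \<le> M" and M: "0 \<le> M"
  shows "cfg_lang (G h S M) (qn 0) = QL h S 0"
proof
  show "cfg_lang (G h S M) (qn 0) \<subseteq> QL h S 0"
    using cfg_sound[OF G_sound[OF M], of h S "qn 0"] by (simp add: Lsem_qn)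
  show "QL h S 0 \<subseteq> cfg_lang (G h S M) (qn 0)"
  proof
    fix w assume "w \<in> QL h S 0"
    then have "der (G h S M) (qn 0) w" using Q_complete[OF hb, of "length w"] M by auto
    then show "w \<in> cfg_lang (G h S M) (qn 0)" by (simp add: der_def cfg_lang_def)
  qed
qed



lemma sum_h: "sum_list (map (\<lambda>s. p * fst s + q * snd s) xs) = p * sum_list (map fst xs) + q * (sum_list (map snd xs) :: int)"
  by (induction xs) (auto simp: algebra_simps)

lemma pos_sign: "(b::real) > 0 \<Longrightarrow> a = b * z \<Longrightarrow> (0 \<le> a) = (0 \<le> z)"
  by (simp add: zero_le_mult_iff)

lemma H_iff:
  assumes c: "cos t > 0" and tn: "tan t = real_of_int p / real_of_int q" and q: "q > 0"
  shows "((X, Y) \<in> H t) \<longleftrightarrow> 0 \<le> p * X + q * Y"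
proof -
  have s: "sin t = real_of_int p / real_of_int q * cos t" using tn c by (simp add: tan_def field_simps)
  have "real_of_int X * sin t + real_of_int Y * cos t = (cos t / real_of_int q) * real_of_int (p * X + q * Y)"
    using q by (simp add: s field_simps)
  moreover have "cos t / real_of_int q > 0" using c q by simp
  ultimately have "(0 \<le> real_of_int X * sin t + real_of_int Y * cos t) \<longleftrightarrow> 0 \<le> real_of_int (p * X + q * Y)"
    by (rule pos_sign[rotated])
  moreover have "(0 \<le> real_of_int p * real_of_int X + real_of_int q * real_of_int Y) \<longleftrightarrow> 0 \<le> p*X + q*Y"
    by (metis of_int_0_le_iff of_int_add of_int_mult)
  ultimately show ?thesis by (simp add: H_def)
qed

lemma walks_eq:
  assumes c: "cos t > 0" and tn: "tan t = real_of_int p / real_of_int q" and q: "q > 0"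
  shows "walks (H t) S = QL (\<lambda>s. p * fst s + q * snd s) S 0"
proof -
  have "endpoint (take k w) \<in> H t \<longleftrightarrow> 0 \<le> ht (\<lambda>s. p * fst s + q * snd s) 0 w k" for k w
    unfolding endpoint_def ht_def using H_iff[OF c tn q] sum_h[of p q "take k w"] by simp
  then show ?thesis unfolding walks_def QL_def by auto
qed



lemma Y2: "(1 + (y::real))^2 \<le> 2 * (1 + y^2)"
proof -
  have "0 \<le> (1 - y)^2" by simp
  then show ?thesis by (simp add: power2_eq_square algebra_simps)
qed

lemma X2_bound: "(\<delta>::real) > 0 \<Longrightarrow> (1 + 1/\<delta>)^2 \<le> 2 * (1 + 1/\<delta>^2)"
  using Y2[of "1/\<delta>"] by (simp add: power_divide)

theorem mainTheorem8:
  fixes S :: "step set" and \<theta> :: real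
  assumes "finite S" and "0 \<le> \<theta>" and "\<theta> < pi / 2"
  shows "\<exists>C > 0. \<forall>\<delta> > 0. \<exists>(N :: nat set) R A \<theta>r.
           is_cfg N S R A \<and>
           real (card N) \<le> C * (1 + 1 / \<delta>) \<and>
           real (card R) \<le> C * (1 + 1 / \<delta>\<^sup>2) \<and>
           - (pi / 2) < \<theta>r \<and> \<theta>r < pi / 2 \<and>
           tan \<theta>r \<in> \<rat> \<and> \<bar>tan \<theta> - tan \<theta>r\<bar> \<le> \<delta> \<and>
           cfg_lang R A = walks (H \<theta>r) S"
proof -
  define T where "T = tan \<theta>"
  have T0: "0 \<le> T"
  proof (cases "\<theta> = 0")
    case True then show ?thesis by (simp add: T_def)
  next
    case False then show ?thesis using assms tan_gt_zero[of \<theta>] by (simp add: T_def)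
  qed
  define B :: int where "B = 1 + (\<Sum>s\<in>S. \<bar>fst s\<bar> + \<bar>snd s\<bar>)"
  have B1: "1 \<le> B" unfolding B_def by (simp add: sum_nonneg)
  have Bs: "\<bar>fst s\<bar> + \<bar>snd s\<bar> \<le> B" if "s \<in> S" for s
  proof -
    have "\<bar>fst s\<bar> + \<bar>snd s\<bar> \<le> (\<Sum>s\<in>S. \<bar>fst s\<bar> + \<bar>snd s\<bar>)"
      by (rule member_le_sum[OF that]) (use assms(1) in auto)
    then show ?thesis by (simp add: B_def)
  qed
  define K :: real where "K = (T + 1) * real_of_int B"
  have K0: "0 \<le> K" using T0 B1 by (simp add: K_def)
  define L :: real where "L = 3 + 3 * real (card S)"
  have L0: "1 \<le> L" by (simp add: L_def)
  define C where "C = 3 * K + 3 + 2 * L * (K + 1)^2"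
  have C0: "0 < C" using K0 L0 by (simp add: C_def add_pos_nonneg)
  show ?thesis
  proof (intro exI[of _ C] conjI allI impI C0)
    fix \<delta> :: real assume d: "\<delta> > 0"
    define X where "X = 1 + 1 / \<delta>"
    have X1: "1 \<le> X" using d by (simp add: X_def)
    define q :: int where "q = ceiling (1 / \<delta>)"
    define p :: int where "p = floor (T * q)"
    define M :: int where "M = (\<bar>p\<bar> + q) * B"
    define h where "h = (\<lambda>s::step. p * fst s + q * snd s)"
    define \<theta>r where "\<theta>r = arctan (real_of_int p / real_of_int q)"
    have q1: "real_of_int q \<ge> 1 / \<delta>" unfolding q_def by (rule le_of_int_ceiling)
    have q2: "real_of_int q \<le> X" unfolding q_def X_def by (rule of_int_ceiling_le_add_one[THEN order.trans]) simp
    have qpos: "0 < q" using q1 d by (smt (verit) divide_pos_pos of_int_0_less_iff)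
    have p1: "real_of_int p \<le> T * q" unfolding p_def by (rule of_int_floor_le)
    have p2: "T * q < real_of_int p + 1" unfolding p_def by (rule real_of_int_floor_add_one_gt)
    have p0: "0 \<le> p" unfolding p_def using T0 qpos by simp
    have M0: "0 \<le> M" unfolding M_def using B1 qpos by simp
    have hb: "\<forall>s\<in>S. \<bar>h s\<bar> \<le> M"
    proof
      fix s assume s: "s \<in> S"
      have "\<bar>h s\<bar> \<le> \<bar>p\<bar> * \<bar>fst s\<bar> + \<bar>q\<bar> * \<bar>snd s\<bar>" unfolding h_def
        by (metis abs_mult abs_triangle_ineq)
      also have "\<dots> \<le> (\<bar>p\<bar> + q) * (\<bar>fst s\<bar> + \<bar>snd s\<bar>)" using qpos by (simp add: algebra_simps)
      also have "\<dots> \<le> (\<bar>p\<bar> + q) * B" using Bs[OF s] qpos by (intro mult_left_mono) auto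
      finally show "\<bar>h s\<bar> \<le> M" by (simp add: M_def)
    qed
    have MK: "real_of_int M \<le> K * X"
    proof -
      have "real_of_int M = (real_of_int p + real_of_int q) * real_of_int B" using p0 by (simp add: M_def)
      also have "\<dots> \<le> (T * q + q) * real_of_int B" using p1 B1 by (intro mult_right_mono) auto
      also have "\<dots> = (T + 1) * real_of_int B * q" by (simp add: algebra_simps)
      also have "\<dots> \<le> (T + 1) * real_of_int B * X" using q2 T0 B1 by (intro mult_left_mono) auto
      finally show ?thesis by (simp add: K_def)
    qed
    have tanr: "tan \<theta>r = real_of_int p / real_of_int q" by (simp add: \<theta>r_def tan_arctan)
    have b1: "- (pi / 2) < \<theta>r" "\<theta>r < pi / 2" unfolding \<theta>r_def by (rule arctan_lbound, rule arctan_ubound)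
    have cpos: "cos \<theta>r > 0" using b1 by (intro cos_gt_zero_pi) auto
    have rat: "tan \<theta>r \<in> \<rat>" unfolding tanr by (intro Rats_divide Rats_of_int)
    have approx: "\<bar>tan \<theta> - tan \<theta>r\<bar> \<le> \<delta>"
    proof -
      have qp: "real_of_int q > 0" using qpos by simp
      have e1: "tan \<theta> - tan \<theta>r = (T * q - p) / q" using qp by (simp add: tanr T_def field_simps)
      have "0 \<le> (T * q - p) / q" using p1 qp by simp
      moreover have "(T * q - p) / q \<le> 1 / q" using p2 qp by (intro divide_right_mono) auto
      moreover have "1 / real_of_int q \<le> \<delta>" using q1 d qp by (simp add: field_simps)
      ultimately show ?thesis unfolding e1 by simp
    qed
    have lang: "cfg_lang (G h S M) (qn 0) = walks (H \<theta>r) S"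
      using G_lang[OF hb M0] walks_eq[OF cpos tanr qpos, of S] by (simp add: h_def)
    have cN: "real (card {..<3 * nat M + 3}) \<le> C * (1 + 1 / \<delta>)"
    proof -
      have "real (card {..<3 * nat M + 3}) = 3 * real_of_int M + 3" using M0 by simp
      also have "\<dots> \<le> 3 * (K * X) + 3 * X" using MK X1 by simp
      also have "\<dots> = (3 * K + 3) * X" by (simp add: algebra_simps)
      also have "\<dots> \<le> C * X" using X1 K0 L0 by (intro mult_right_mono) (auto simp: C_def)
      finally show ?thesis by (simp add: X_def)
    qed
    have cR: "real (card (G h S M)) \<le> C * (1 + 1 / \<delta>\<^sup>2)"
    proof -
      define m where "m = real_of_int M"
      have m0: "0 \<le> m" using M0 by (simp add: m_def)
      have "real (card (G h S M)) \<le> real (3 + card S + 2 * nat M + 2 * (card S * (nat M + 1) * (nat M + 1)))"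
        using card_G(2)[OF assms(1) M0, of h] by linarith
      also have "\<dots> = 3 + real (card S) + 2 * m + 2 * (real (card S) * (m + 1) * (m + 1))"
        using M0 by (simp add: m_def algebra_simps)
      also have "\<dots> \<le> L * (m + 1)^2"
      proof -
        have "0 \<le> real (card S) * m" "0 \<le> m * m" using m0 by auto
        then show ?thesis using m0 by (simp add: L_def power2_eq_square algebra_simps)
      qed
      also have "\<dots> \<le> L * ((K + 1) * X)^2"
      proof -
        have "m + 1 \<le> (K + 1) * X" using MK X1 K0 by (simp add: m_def algebra_simps)
        then have "(m+1)^2 \<le> ((K + 1) * X)^2" using m0 by (intro power_mono) auto
        then show ?thesis using L0 by simp
      qed
      also have "\<dots> = L * (K + 1)^2 * X^2" by (simp add: power_mult_distrib)
      also have "\<dots> \<le> L * (K + 1)^2 * (2 * (1 + 1/\<delta>^2))"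
        using X2_bound[OF d] L0 by (intro mult_left_mono) (auto simp: X_def)
      also have "\<dots> \<le> C * (1 + 1/\<delta>^2)"
      proof -
        have "2 * L * (K + 1)^2 \<le> C" using K0 by (simp add: C_def)
        moreover have "0 \<le> 1 + 1/\<delta>^2" by (simp add: add_nonneg_nonneg)
        ultimately show ?thesis by (metis mult.assoc mult.commute mult_right_mono)
      qed
      finally show ?thesis .
    qed
    show "\<exists>(N :: nat set) R A \<theta>r.
           is_cfg N S R A \<and>
           real (card N) \<le> C * (1 + 1 / \<delta>) \<and>
           real (card R) \<le> C * (1 + 1 / \<delta>\<^sup>2) \<and>
           - (pi / 2) < \<theta>r \<and> \<theta>r < pi / 2 \<and>
           tan \<theta>r \<in> \<rat> \<and> \<bar>tan \<theta> - tan \<theta>r\<bar> \<le> \<delta> \<and>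
           cfg_lang R A = walks (H \<theta>r) S"
      using is_cfg_G[OF assms(1) M0 hb] cN cR b1 rat approx lang by blast
  qed
qed

end
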